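(* Let $L$ be a finite multiset of positive integers. If $L$ admits a special linear realization of type $2$, then for every integer $b\geq 2$ the multiset $L\cup\{2^b\}$ also admits a special linear realization of type $2$.
   Context: For a multiset $L$ of positive integers with $|L|=v-1$, each at most $v-1$, a linear realization of $L$ is a Hamiltonian path $[x_0,x_1,\dots,x_{v-1}]$ of the complete graph on $\{0,1,\dots,v-1\}$ such that the multiset $\{|x_i-x_{i+1}| : i=0,\dots,v-2\}$ equals $L$. A linear realization is special of type $2$ if its two endpoints are $0$ and $1$. $\{2^b\}$ denotes the multiset of $b$ copies of $2$, and $\cup$ is multiset union. *)

theory Defs
  imports Main "HOL-Library.Multiset"
begin

definition absdiff :: "nat \<Rightarrow> nat \<Rightarrow> nat" where
  "absdiff a b = (if a \<le> b then b - a else a - b)"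

definition edge_lengths :: "nat list \<Rightarrow> nat multiset" where
  "edge_lengths xs = mset (map (\<lambda>(a, b). absdiff a b) (zip xs (tl xs)))"

text \<open>xs = [x_0,...,x_{v-1}] is a Hamiltonian path of K_v on {0,...,v-1}
  (v = length xs) whose multiset of edge lengths is L.\<close>
definition linear_realization :: "nat multiset \<Rightarrow> nat list \<Rightarrow> bool" where
  "linear_realization L xs \<longleftrightarrow>
     xs \<noteq> [] \<and> distinct xs \<and> set xs = {0..<length xs} \<and> edge_lengths xs = L"

definition special_lr2 :: "nat multiset \<Rightarrow> nat list \<Rightarrow> bool" where
  "special_lr2 L xs \<longleftrightarrow> linear_realization L xs \<and> {hd xs, last xs} = {0, 1}"

definition has_special_lr2 :: "nat multiset \<Rightarrow> bool" where
  "has_special_lr2 L \<longleftrightarrow> (\<exists>xs. special_lr2 L xs)"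

end

theory Submission
  imports Defs
begin

lemma el_nil[simp]: "edge_lengths [] = {#}" by (simp add: edge_lengths_def)
lemma el_one[simp]: "edge_lengths [a] = {#}" by (simp add: edge_lengths_def)
lemma el_cons2[simp]: "edge_lengths (a # b # ys) = add_mset (absdiff a b) (edge_lengths (b # ys))"
  by (simp add: edge_lengths_def)

lemma absdiff_sym: "absdiff a b = absdiff b a" by (simp add: absdiff_def)

lemma el_snoc: "xs \<noteq> [] \<Longrightarrow> edge_lengths (xs @ [a]) = add_mset (absdiff (last xs) a) (edge_lengths xs)"
proof (induction xs rule: induct_list012)
  case (3 x y zs) then show ?case by auto
qed auto

lemma el_cons: "xs \<noteq> [] \<Longrightarrow> edge_lengths (x # xs) = add_mset (absdiff x (hd xs)) (edge_lengths xs)"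
  by (cases xs) auto

lemma el_rev: "edge_lengths (rev xs) = edge_lengths xs"
proof (induction xs)
  case (Cons x xs)
  show ?case
  proof (cases "xs = []")
    case False
    then have "rev xs \<noteq> []" by simp
    then have "edge_lengths (rev (x # xs)) = add_mset (absdiff (last (rev xs)) x) (edge_lengths (rev xs))"
      by (simp add: el_snoc)
    also have "\<dots> = edge_lengths (x # xs)" using False Cons.IH
      by (simp add: el_cons last_rev absdiff_sym)
    finally show ?thesis .
  qed simp
qed simp

lemma el_map: "edge_lengths (map Suc xs) = edge_lengths xs"
  by (induction xs rule: induct_list012) (auto simp: absdiff_def)

lemma step:
  assumes "has_special_lr2 L"
  shows "has_special_lr2 (L + {#2#})"
proof -
  obtain xs where xs: "special_lr2 L xs" using assms has_special_lr2_def by blast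
  have xl: "linear_realization L xs" and he: "{hd xs, last xs} = {0, 1}"
    using xs unfolding special_lr2_def by auto
  have xne: "xs \<noteq> []" and xd: "distinct xs" and xsset: "set xs = {0..<length xs}"
    and xe: "edge_lengths xs = L" using xl unfolding linear_realization_def by auto
  have "\<exists>ys. linear_realization L ys \<and> hd ys = 0 \<and> last ys = 1"
  proof (cases "hd xs = 0")
    case True
    then have "last xs = 1" using he by (simp add: doubleton_eq_iff)
    then show ?thesis using xl True by blast
  next
    case False
    then have h1: "hd xs = 1" and l0: "last xs = 0" using he by (auto simp: doubleton_eq_iff)
    have "linear_realization L (rev xs)"
      unfolding linear_realization_def using xne xd xsset xe by (simp add: el_rev)
    moreover have "hd (rev xs) = 0" using xne l0 by (simp add: hd_rev)
    moreover have "last (rev xs) = 1" using xne h1 by (simp add: last_rev)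
    ultimately show ?thesis by blast
  qed
  then obtain ys where ys: "linear_realization L ys" "hd ys = 0" "last ys = 1" by blast
  have ne: "ys \<noteq> []" and d: "distinct ys" and s: "set ys = {0..<length ys}" and e: "edge_lengths ys = L"
    using ys(1) unfolding linear_realization_def by auto
  define ws where "ws = map Suc (rev ys)"
  define zs where "zs = 0 # ws"
  have wne: "ws \<noteq> []" using ne unfolding ws_def by simp
  have "hd ws = Suc (hd (rev ys))" unfolding ws_def using ne by (simp add: hd_map)
  moreover have "hd (rev ys) = 1" using ne ys(3) by (simp add: hd_rev)
  ultimately have hw: "hd ws = 2" by presburger
  have "edge_lengths zs = add_mset (absdiff 0 (hd ws)) (edge_lengths ws)"
    unfolding zs_def using wne by (rule el_cons)
  also have "\<dots> = add_mset 2 (edge_lengths ws)" using hw by (simp add: absdiff_def)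
  also have "\<dots> = add_mset 2 L" unfolding ws_def by (simp add: el_map el_rev e)
  finally have ez: "edge_lengths zs = L + {#2#}" by simp
  have dz: "distinct zs" unfolding zs_def ws_def using d by (auto simp: distinct_map)
  have "set zs = insert 0 (Suc ` {0..<length ys})" unfolding zs_def ws_def using s by simp
  also have "\<dots> = {0..<Suc (length ys)}"
  proof (rule set_eqI)
    fix x show "x \<in> insert 0 (Suc ` {0..<length ys}) \<longleftrightarrow> x \<in> {0..<Suc (length ys)}"
      by (cases x) auto
  qed
  finally have sz: "set zs = {0..<length zs}" unfolding zs_def ws_def by simp
  have hz: "hd zs = 0" unfolding zs_def by simp
  have lz: "last zs = 1" unfolding zs_def ws_def using ne ys(2) by (simp add: last_map last_rev)
  have "special_lr2 (L + {#2#}) zs"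
    unfolding special_lr2_def linear_realization_def using ez dz sz hz lz by (simp add: zs_def)
  then show ?thesis unfolding has_special_lr2_def by blast
qed

lemma iter: "has_special_lr2 L \<Longrightarrow> has_special_lr2 (L + replicate_mset n 2)"
proof (induction n)
  case (Suc n)
  then have "has_special_lr2 (L + replicate_mset n 2 + {#2#})" using step by blast
  then show ?case by (simp add: add.assoc)
qed simp

theorem lemma2p4:
  fixes L :: "nat multiset" and b :: nat
  assumes "\<forall>x \<in># L. 0 < x"
    and "has_special_lr2 L"
    and "2 \<le> b"
  shows "has_special_lr2 (L + replicate_mset b 2)"
  by (rule iter[OF assms(2)])

end
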